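(* For every list (of any length $l$, in any initial order) and every request sequence $\sigma$ of length $n$, there is a deterministic online algorithm with advice that serves $\sigma$ at cost exactly $\mathrm{OPT}(\sigma)$ while reading at most $\mathrm{OPT}(\sigma)-n$ bits of advice, where costs are measured in the full cost model.
   Context: Static list update problem: a list contains $l$ distinct items in some initial order; a request sequence $\sigma=\langle\sigma_1,\dots,\sigma_n\rangle$ of items of the list must be served in order (online: when serving $\sigma_t$ the algorithm does not know $\sigma_{t+1},\dots$). Serving a request to the item currently at position $i$ (positions $1,\dots,l$ from the front) costs $i$ in the full cost model and $i-1$ in the partial cost model. Immediately after an access, the accessed item may be moved to any position closer to the front at no cost (free exchange); at any time, two adjacent items may be swapped at cost $1$ (paid exchange). For an algorithm $A$, $A(\sigma)$ denotes its total cost on $\sigma$, and $\mathrm{OPT}(\sigma)$ denotes the minimum total cost of any offline algorithm (knowing $\sigma$ in advance) serving $\sigma$ from the same initial list. Advice model: before serving, a benevolent oracle that knows the whole sequence $\sigma$ writes an infinite binary string (the advice tape); the online algorithm may read bits from the tape at any time. The number of advice bits read on $\sigma$ is the length of the shortest prefix of the tape containing all bits accessed. *)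

theory Defs
  imports Main
begin

(* Lists are modelled as distinct HOL lists; index 0 is the front. *)

(* 0-based position of item x in list L (meaningful when x occurs in L) *)
definition pos :: "'a list \<Rightarrow> 'a \<Rightarrow> nat" where
  "pos L x = (LEAST i. i < length L \<and> L ! i = x)"

(* paid exchange: swap the adjacent items at 0-based positions i and i+1 *)
definition swap_adj :: "nat \<Rightarrow> 'a list \<Rightarrow> 'a list" where
  "swap_adj i L = L[i := L ! Suc i, Suc i := L ! i]"

definition swaps :: "nat list \<Rightarrow> 'a list \<Rightarrow> 'a list" where
  "swaps ps L = fold swap_adj ps L"

(* free exchange: move item x to 0-based position j *)
definition move_to :: "nat \<Rightarrow> 'a \<Rightarrow> 'a list \<Rightarrow> 'a list" where
  "move_to j x L = (let ys = remove1 x L in take j ys @ x # drop j ys)"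

(* An action for one request: a list of paid exchanges performed before the
   access, and the (0-based) target position of the free exchange performed
   immediately after the access. *)
type_synonym action = "nat list \<times> nat"

definition valid_action :: "'a list \<Rightarrow> 'a \<Rightarrow> action \<Rightarrow> bool" where
  "valid_action L x a \<longleftrightarrow>
     (\<forall>i\<in>set (fst a). Suc i < length L) \<and> snd a \<le> pos (swaps (fst a) L) x"

definition step_state :: "'a list \<Rightarrow> 'a \<Rightarrow> action \<Rightarrow> 'a list" where
  "step_state L x a = move_to (snd a) x (swaps (fst a) L)"

(* full cost model: access to position i (1-based) costs i; each paid exchange costs 1 *)
definition step_cost :: "'a list \<Rightarrow> 'a \<Rightarrow> action \<Rightarrow> nat" where
  "step_cost L x a = length (fst a) + (pos (swaps (fst a) L) x + 1)"

fun valid_run :: "'a list \<Rightarrow> 'a list \<Rightarrow> action list \<Rightarrow> bool" where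
  "valid_run L [] [] = True"
| "valid_run L (x # xs) (a # as) = (valid_action L x a \<and> valid_run (step_state L x a) xs as)"
| "valid_run L _ _ = False"

fun run_cost :: "'a list \<Rightarrow> 'a list \<Rightarrow> action list \<Rightarrow> nat" where
  "run_cost L (x # xs) (a # as) = step_cost L x a + run_cost (step_state L x a) xs as"
| "run_cost L _ _ = 0"

definition OPT :: "'a list \<Rightarrow> 'a list \<Rightarrow> nat" where
  "OPT L \<sigma> = (LEAST c. \<exists>as. valid_run L \<sigma> as \<and> run_cost L \<sigma> as = c)"

(* A deterministic online algorithm with advice: given the initial list, the
   requests revealed so far (the last one being the current request) and the
   advice tape, it chooses the action for the current request. *)
type_synonym 'a advice_alg = "'a list \<Rightarrow> 'a list \<Rightarrow> (nat \<Rightarrow> bool) \<Rightarrow> action"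

definition alg_actions :: "'a advice_alg \<Rightarrow> 'a list \<Rightarrow> 'a list \<Rightarrow> (nat \<Rightarrow> bool) \<Rightarrow> action list" where
  "alg_actions A L \<sigma> w = map (\<lambda>t. A L (take (Suc t) \<sigma>) w) [0..<length \<sigma>]"

(* On input \<sigma> with tape w, A reads at most b advice bits: its behaviour is
   determined by the first b bits of the tape. *)
definition reads_at_most :: "'a advice_alg \<Rightarrow> 'a list \<Rightarrow> 'a list \<Rightarrow> (nat \<Rightarrow> bool) \<Rightarrow> nat \<Rightarrow> bool" where
  "reads_at_most A L \<sigma> w b \<longleftrightarrow>
     (\<forall>w'. (\<forall>i<b. w' i = w i) \<longrightarrow> alg_actions A L \<sigma> w' = alg_actions A L \<sigma> w)"

end

theory Submission
  imports Defs "HOL-Library.Product_Lexorder" "HOL-Library.Multiset"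
begin


lemma pos_Least:
  assumes "x \<in> set K" shows "pos K x < length K \<and> K ! pos K x = x"
proof -
  obtain i where "i < length K" "K ! i = x" using assms by (auto simp: in_set_conv_nth)
  then show ?thesis unfolding pos_def using LeastI[of "\<lambda>i. i < length K \<and> K ! i = x" i] by auto
qed

lemma pos_nth:
  assumes "distinct K" "i < length K" shows "pos K (K ! i) = i"
  unfolding pos_def
  by (rule Least_equality) (use assms nth_eq_iff_index_eq in auto)

lemma pos_lt: assumes "x \<in> set K" shows "pos K x < length K" using pos_Least[OF assms] by blast
lemma nth_pos[simp]: assumes "x \<in> set K" shows "K ! pos K x = x" using pos_Least[OF assms] by blast

lemma pos_inj: "x \<in> set K \<Longrightarrow> y \<in> set K \<Longrightarrow> pos K x = pos K y \<Longrightarrow> x = y"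
  by (metis nth_pos)

lemma pos_cases: "x \<in> set K \<Longrightarrow> y \<in> set K \<Longrightarrow> x \<noteq> y \<Longrightarrow> pos K x < pos K y \<or> pos K y < pos K x"
  using pos_inj by (metis linorder_neqE_nat)

lemma card_before:
  assumes "distinct K" "x \<in> set K"
  shows "card {y \<in> set K. pos K y < pos K x} = pos K x"
proof -
  have "{y \<in> set K. pos K y < pos K x} = (\<lambda>i. K ! i) ` {..<pos K x}"
  proof (rule set_eqI, rule iffI)
    fix y assume "y \<in> {y \<in> set K. pos K y < pos K x}"
    then show "y \<in> (\<lambda>i. K ! i) ` {..<pos K x}"
      by (auto intro!: image_eqI[where x="pos K y"])
  next
    fix y assume "y \<in> (\<lambda>i. K ! i) ` {..<pos K x}"
    then obtain i where "i < pos K x" "y = K ! i" by auto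
    then show "y \<in> {y \<in> set K. pos K y < pos K x}"
      using pos_lt[OF assms(2)] pos_nth[OF assms(1)] by auto
  qed
  moreover have "inj_on (\<lambda>i. K ! i) {..<pos K x}"
    using assms pos_lt[OF assms(2)] by (auto simp: inj_on_def nth_eq_iff_index_eq)
  ultimately show ?thesis by (simp add: card_image)
qed

definition invs :: "'a list \<Rightarrow> 'a list \<Rightarrow> ('a \<times> 'a) set" where
  "invs K M = {(y,z). y \<in> set K \<and> z \<in> set K \<and> pos K y < pos K z \<and> pos M z < pos M y}"

definition ninv :: "'a list \<Rightarrow> 'a list \<Rightarrow> nat" where
  "ninv K M = card (invs K M)"

lemma finite_invs[simp]: "finite (invs K M)"
  by (rule finite_subset[of _ "set K \<times> set K"]) (auto simp: invs_def)

lemma invs_tri: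
  assumes "set B = set A" "set C = set A"
  shows "invs A C \<subseteq> invs A B \<union> invs B C"
proof
  fix p assume "p \<in> invs A C"
  then obtain y z where p: "p = (y,z)" "y \<in> set A" "z \<in> set A" "pos A y < pos A z" "pos C z < pos C y"
    by (auto simp: invs_def)
  have "y \<noteq> z" using p by auto
  then have "pos B y < pos B z \<or> pos B z < pos B y" using pos_cases[of y B z] p assms by auto
  then show "p \<in> invs A B \<union> invs B C" using p assms by (auto simp: invs_def)
qed

lemma ninv_tri:
  assumes "set B = set A" "set C = set A"
  shows "ninv A C \<le> ninv A B + ninv B C"
proof -
  have "ninv A C \<le> card (invs A B \<union> invs B C)"
    unfolding ninv_def by (rule card_mono) (use invs_tri[OF assms] in auto)
  also have "\<dots> \<le> ninv A B + ninv B C" unfolding ninv_def by (rule card_Un_le)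
  finally show ?thesis .
qed

lemma pos_le_ninv:
  assumes "distinct N" "distinct M" "set M = set N" "x \<in> set N"
  shows "pos N x \<le> ninv N M + pos M x"
proof -
  have "{y \<in> set N. pos N y < pos N x} \<subseteq> {y \<in> set M. pos M y < pos M x} \<union> (\<lambda>p. fst p) ` invs N M"
  proof
    fix y assume y: "y \<in> {y \<in> set N. pos N y < pos N x}"
    show "y \<in> {y \<in> set M. pos M y < pos M x} \<union> (\<lambda>p. fst p) ` invs N M"
    proof (cases "pos M y < pos M x")
      case True then show ?thesis using y assms by auto
    next
      case False
      have "y \<noteq> x" using y by auto
      then have "pos M x < pos M y" using False pos_cases[of y M x] y assms by auto
      then have "(y,x) \<in> invs N M" using y assms by (auto simp: invs_def)
      then show ?thesis by (auto intro: image_eqI[where x="(y,x)"])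
    qed
  qed
  then have "card {y \<in> set N. pos N y < pos N x} \<le> card ({y \<in> set M. pos M y < pos M x} \<union> (\<lambda>p. fst p) ` invs N M)"
    by (intro card_mono) auto
  then have "pos N x \<le> card ({y \<in> set M. pos M y < pos M x} \<union> (\<lambda>p. fst p) ` invs N M)"
    using card_before[OF assms(1,4)] by simp
  also have "\<dots> \<le> card {y \<in> set M. pos M y < pos M x} + card ((\<lambda>p. fst p) ` invs N M)"
    by (rule card_Un_le)
  finally have 1: "pos N x \<le> card {y \<in> set M. pos M y < pos M x} + card ((\<lambda>p. fst p) ` invs N M)" .
  have 2: "card {y \<in> set M. pos M y < pos M x} = pos M x"
    using card_before[OF assms(2)] assms by simp
  have 3: "card ((\<lambda>p. fst p) ` invs N M) \<le> ninv N M" unfolding ninv_def by (rule card_image_le) simp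
  show ?thesis using 1 2 3 by linarith
qed



lemma swap_props:
  assumes "Suc i < length K"
  shows "set (swap_adj i K) = set K" "length (swap_adj i K) = length K"
        "distinct (swap_adj i K) = distinct K"
  using assms unfolding swap_adj_def by simp_all

lemma pos_swap:
  assumes "distinct K" "Suc i < length K" "v \<in> set K"
  shows "pos (swap_adj i K) v = (if v = K!i then Suc i else if v = K!Suc i then i else pos K v)"
proof -
  let ?K = "swap_adj i K"
  have d: "distinct ?K" "length ?K = length K" using swap_props[OF assms(2)] assms by auto
  have n1: "?K ! Suc i = K ! i" "?K ! i = K ! Suc i" using assms unfolding swap_adj_def
    by (auto simp: nth_list_update)
  show ?thesis
  proof (cases "v = K!i")
    case True then show ?thesis using pos_nth[OF d(1), of "Suc i"] n1 d assms by simp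
  next
    case F1: False
    show ?thesis
    proof (cases "v = K ! Suc i")
      case True then show ?thesis using pos_nth[OF d(1), of i] n1 d assms F1 by simp
    next
      case False
      let ?k = "pos K v"
      have "?k \<noteq> i" "?k \<noteq> Suc i" using F1 False nth_pos[OF assms(3)] by auto
      then have "?K ! ?k = v" using assms unfolding swap_adj_def by (auto simp: nth_list_update)
      then have "pos ?K v = ?k" using pos_nth[OF d(1), of ?k] pos_lt[OF assms(3)] d by simp
      then show ?thesis using F1 False by simp
    qed
  qed
qed

lemma pos_swap':
  assumes "distinct K" "Suc i < length K" "v \<in> set K"
  shows "pos (swap_adj i K) v = (if pos K v = i then Suc i else if pos K v = Suc i then i else pos K v)"
proof -
  have "v = K!i \<longleftrightarrow> pos K v = i" "v = K!Suc i \<longleftrightarrow> pos K v = Suc i"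
    using pos_nth[OF assms(1)] assms(2) nth_pos[OF assms(3)] by auto
  then show ?thesis using pos_swap[OF assms] by simp
qed

lemma ninv_swap:
  assumes "distinct K" "Suc i < length K"
  shows "ninv K (swap_adj i K) \<le> 1"
proof -
  let ?a = "K!i" and ?b = "K!Suc i"
  have pa: "pos K ?a = i" "pos K ?b = Suc i" using pos_nth[OF assms(1)] assms(2) by auto
  have "invs K (swap_adj i K) \<subseteq> {(?a, ?b)}"
  proof
    fix q assume "q \<in> invs K (swap_adj i K)"
    then obtain y z where q: "q = (y,z)" "y \<in> set K" "z \<in> set K" "pos K y < pos K z"
      "pos (swap_adj i K) z < pos (swap_adj i K) y" by (auto simp: invs_def)
    have ey: "y = ?a \<longleftrightarrow> pos K y = i"
      using pa nth_pos[OF q(2)] by auto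
    have ez: "z = ?b \<longleftrightarrow> pos K z = Suc i"
      using pa nth_pos[OF q(3)] by auto
    have sy: "pos (swap_adj i K) y = (if pos K y = i then Suc i else if pos K y = Suc i then i else pos K y)"
      using pos_swap'[OF assms q(2)] .
    have sz: "pos (swap_adj i K) z = (if pos K z = i then Suc i else if pos K z = Suc i then i else pos K z)"
      using pos_swap'[OF assms q(3)] .
    have "pos K y = i \<and> pos K z = Suc i" using q(4,5) sy sz by (auto split: if_splits)
    then have "y = ?a \<and> z = ?b" using ey ez by simp
    then show "q \<in> {(?a, ?b)}" using q by simp
  qed
  then have "card (invs K (swap_adj i K)) \<le> card {(?a,?b)}" by (intro card_mono) auto
  then show ?thesis unfolding ninv_def by simp
qed

lemma swaps_Cons: "swaps (i # ps) K = swaps ps (swap_adj i K)" by (simp add: swaps_def)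
lemma swaps_Nil: "swaps [] K = K" by (simp add: swaps_def)

lemma swaps_props:
  assumes "\<forall>i\<in>set ps. Suc i < length K"
  shows "set (swaps ps K) = set K \<and> length (swaps ps K) = length K \<and> distinct (swaps ps K) = distinct K"
  using assms
proof (induction ps arbitrary: K)
  case Nil then show ?case by (simp add: swaps_Nil)
next
  case (Cons i ps)
  have "\<forall>j\<in>set ps. Suc j < length (swap_adj i K)" using Cons.prems swap_props[of i K] by auto
  from Cons.IH[OF this] show ?case using swap_props[of i K] Cons.prems by (simp add: swaps_Cons)
qed

lemma ninv_swaps:
  assumes "distinct K" "\<forall>i\<in>set ps. Suc i < length K"
  shows "ninv K (swaps ps K) \<le> length ps"
  using assms
proof (induction ps arbitrary: K)
  case Nil
  have "invs K K = {}" by (auto simp: invs_def)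
  then show ?case by (simp add: swaps_Nil ninv_def)
next
  case (Cons i ps)
  let ?K = "swap_adj i K"
  have h: "\<forall>j\<in>set ps. Suc j < length ?K" "distinct ?K" "set ?K = set K"
    using Cons.prems swap_props[of i K] by auto
  have "set (swaps ps ?K) = set K" using swaps_props[OF h(1)] h by simp
  then have "ninv K (swaps ps ?K) \<le> ninv K ?K + ninv ?K (swaps ps ?K)"
    using ninv_tri h by blast
  also have "\<dots> \<le> 1 + length ps" using ninv_swap[of K i] Cons.prems Cons.IH[OF h(2,1)] by simp
  finally show ?case by (simp add: swaps_Cons)
qed

lemma adj_inv:
  assumes "distinct K" "distinct M" "set M = set K" "K \<noteq> M"
  shows "\<exists>i. Suc i < length K \<and> pos M (K ! Suc i) < pos M (K ! i)"
proof (rule ccontr)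
  assume "\<not> ?thesis"
  then have h: "\<forall>i. Suc i < length K \<longrightarrow> pos M (K ! i) \<le> pos M (K ! Suc i)" by auto
  have s: "sorted (map (pos M) K)" unfolding sorted_iff_nth_Suc using h by simp
  have inj: "inj_on (pos M) (set M)" by (auto simp: inj_on_def intro: pos_inj)
  have d: "distinct (map (pos M) K)" using assms inj by (simp add: distinct_map)
  have len: "length M = length K" using assms by (metis distinct_card)
  have mM: "map (pos M) M = [0..<length M]"
    by (rule nth_equalityI) (auto simp: pos_nth[OF assms(2)])
  have "set (map (pos M) K) = set (map (pos M) M)" using assms by simp
  then have "map (pos M) K = map (pos M) M"
    using sorted_distinct_set_unique[OF s d, of "map (pos M) M"] mM by simp
  then have "K = M" using inj assms by (simp add: inj_on_map_eq_map)
  then show False using assms by simp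
qed

lemma exists_sort:
  assumes "distinct K" "distinct M" "set M = set K"
  shows "\<exists>ps. swaps ps K = M \<and> length ps \<le> ninv K M \<and> (\<forall>i\<in>set ps. Suc i < length K)"
  using assms
proof (induction "ninv K M" arbitrary: K rule: less_induct)
  case less
  show ?case
  proof (cases "K = M")
    case True then show ?thesis by (intro exI[of _ "[]"]) (simp add: swaps_Nil)
  next
    case False
    obtain i where i: "Suc i < length K" "pos M (K ! Suc i) < pos M (K ! i)"
      using adj_inv[OF less.prems False] by blast
    let ?a = "K!i" and ?b = "K!Suc i" and ?K = "swap_adj i K"
    have h: "distinct ?K" "set ?K = set K" "length ?K = length K"
      using swap_props[OF i(1)] less.prems by auto
    have pa: "pos K ?a = i" "pos K ?b = Suc i" using pos_nth[OF less.prems(1)] i by auto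
    have abK: "?a \<in> set K" "?b \<in> set K" using i by auto
    have ab: "(?a, ?b) \<in> invs K M" using i pa abK by (auto simp: invs_def)
    have sub: "invs ?K M \<subseteq> invs K M - {(?a,?b)}"
    proof
      fix q assume "q \<in> invs ?K M"
      then obtain y z where q: "q = (y,z)" "y \<in> set K" "z \<in> set K" "pos ?K y < pos ?K z"
        "pos M z < pos M y" using h by (auto simp: invs_def)
      have ey: "y = ?a \<longleftrightarrow> pos K y = i" "y = ?b \<longleftrightarrow> pos K y = Suc i"
        using pa nth_pos[OF q(2)] by auto
      have ez: "z = ?a \<longleftrightarrow> pos K z = i" "z = ?b \<longleftrightarrow> pos K z = Suc i"
        using pa nth_pos[OF q(3)] by auto
      have sy: "pos ?K y = (if pos K y = i then Suc i else if pos K y = Suc i then i else pos K y)"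
        using pos_swap'[OF less.prems(1) i(1) q(2)] .
      have sz: "pos ?K z = (if pos K z = i then Suc i else if pos K z = Suc i then i else pos K z)"
        using pos_swap'[OF less.prems(1) i(1) q(3)] .
      have "\<not> (pos K y = Suc i \<and> pos K z = i)"
      proof
        assume "pos K y = Suc i \<and> pos K z = i"
        then have "y = ?b" "z = ?a" using ey ez by auto
        then show False using q(5) i(2) by simp
      qed
      then have "pos K y < pos K z \<and> \<not> (pos K y = i \<and> pos K z = Suc i)"
        using q(4) sy sz by (auto split: if_splits)
      then have "pos K y < pos K z \<and> (y,z) \<noteq> (?a,?b)" using ey ez by auto
      then show "q \<in> invs K M - {(?a,?b)}" using q by (auto simp: invs_def)
    qed
    have lt: "ninv ?K M < ninv K M" unfolding ninv_def
      by (rule psubset_card_mono) (simp, use sub ab in blast)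
    have sM: "set M = set ?K" using h(2) less.prems(3) by simp
    from less.hyps[OF lt h(1) less.prems(2) sM]
    obtain ps where ps: "swaps ps ?K = M" "length ps \<le> ninv ?K M" "\<forall>j\<in>set ps. Suc j < length ?K"
      by blast
    have "swaps (i # ps) K = M" using ps(1) by (simp add: swaps_Cons)
    moreover have "length (i # ps) \<le> ninv K M" using ps(2) lt by simp
    moreover have "\<forall>j\<in>set (i # ps). Suc j < length K" using ps(3) h(3) i(1) by simp
    ultimately show ?thesis by blast
  qed
qed



lemma move_to_eq:
  assumes "distinct K" "x \<in> set K" "j \<le> pos K x"
  shows "move_to j x K = take j K @ x # (drop j (take (pos K x) K) @ drop (Suc (pos K x)) K)"
proof -
  let ?p = "pos K x"
  have p: "?p < length K" using pos_lt[OF assms(2)] .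
  have dec: "K = take ?p K @ x # drop (Suc ?p) K" using id_take_nth_drop[OF p] nth_pos[OF assms(2)] by simp
  have nx: "x \<notin> set (take ?p K)"
  proof
    assume "x \<in> set (take ?p K)"
    then obtain i where "i < ?p" "K!i = x" by (auto simp: in_set_conv_nth)
    then show False using nth_eq_iff_index_eq[OF assms(1), of i ?p] p nth_pos[OF assms(2)] by auto
  qed
  have "remove1 x K = remove1 x (take ?p K @ x # drop (Suc ?p) K)" using arg_cong[OF dec, of "remove1 x"] .
  then have R: "remove1 x K = take ?p K @ drop (Suc ?p) K"
    using nx by (simp add: remove1_append)
  have lt: "length (take ?p K) = ?p" using p by simp
  have "take j (take ?p K @ drop (Suc ?p) K) = take j K" using assms(3) lt by (simp add: min_def)
  moreover have "drop j (take ?p K @ drop (Suc ?p) K) = drop j (take ?p K) @ drop (Suc ?p) K"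
    using assms(3) lt by simp
  ultimately show ?thesis unfolding move_to_def Let_def R by simp
qed

lemma move_to_nth:
  assumes "distinct K" "x \<in> set K" "j \<le> pos K x" "k < length K"
  shows "move_to j x K ! (if k < j then k else if k < pos K x then Suc k else if k = pos K x then j else k) = K ! k"
proof -
  let ?p = "pos K x"
  have p: "?p < length K" using pos_lt[OF assms(2)] .
  have Kp: "K ! ?p = x" using assms(2) by simp
  let ?A = "take j K" and ?B = "drop j (take ?p K)" and ?D = "drop (Suc ?p) K"
  have lA: "length ?A = j" using assms(3) p by simp
  have lB: "length ?B = ?p - j" using p by simp
  have eq: "move_to j x K = ?A @ x # (?B @ ?D)" using move_to_eq[OF assms(1-3)] .
  show ?thesis
  proof (cases "k < j")
    case True
    then show ?thesis unfolding eq using lA by (simp add: nth_append)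
  next
    case F1: False
    show ?thesis
    proof (cases "k < ?p")
      case True
      have "(?A @ x # (?B @ ?D)) ! Suc k = (x # (?B @ ?D)) ! (Suc k - j)"
        using lA F1 by (simp add: nth_append)
      also have "\<dots> = (?B @ ?D) ! (k - j)" using F1 by (simp add: Suc_diff_le)
      also have "\<dots> = ?B ! (k - j)"
      proof -
        have "k - j < length ?B" using lB True F1 by simp
        then show ?thesis by (simp add: nth_append del: length_drop length_take)
      qed
      also have "\<dots> = K ! k" using True F1 p by simp
      finally show ?thesis unfolding eq using F1 True by simp
    next
      case F2: False
      show ?thesis
      proof (cases "k = ?p")
        case True
        then show ?thesis unfolding eq using lA Kp F1 by (simp add: nth_append)
      next
        case False
        then have kp: "?p < k" using F2 by simp
        have "(?A @ x # (?B @ ?D)) ! k = (x # (?B @ ?D)) ! (k - j)"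
          using lA F1 by (simp add: nth_append)
        also have "\<dots> = (?B @ ?D) ! (k - j - 1)" using kp assms(3) by (simp add: nth_Cons')
        also have "\<dots> = ?D ! (k - j - 1 - (?p - j))" using lB kp assms(3) by (simp add: nth_append)
        also have "\<dots> = K ! k" using kp assms(3,4) p by simp
        finally show ?thesis unfolding eq using F1 F2 False by simp
      qed
    qed
  qed
qed

lemma move_to_props:
  assumes "distinct K" "x \<in> set K" "j \<le> pos K x"
  shows "distinct (move_to j x K) \<and> set (move_to j x K) = set K \<and> length (move_to j x K) = length K"
proof -
  let ?p = "pos K x"
  let ?P = "take ?p K" and ?D = "drop (Suc ?p) K"
  have p: "?p < length K" using pos_lt[OF assms(2)] .
  have dec: "K = ?P @ x # ?D" using id_take_nth_drop[OF p] nth_pos[OF assms(2)] by simp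
  have tj: "take j K = take j ?P" using assms(3) by (simp add: min_def)
  have "mset (move_to j x K) = mset (take j ?P @ drop j ?P) + {#x#} + mset ?D"
    unfolding move_to_eq[OF assms] tj by simp
  also have "\<dots> = mset ?P + {#x#} + mset ?D" by (simp only: append_take_drop_id)
  also have "\<dots> = mset (?P @ x # ?D)" by simp
  also have "mset (?P @ x # ?D) = mset K" using arg_cong[OF dec, of mset] by simp
  finally have m: "mset (move_to j x K) = mset K" .
  show ?thesis using mset_eq_imp_distinct_iff[OF m] mset_eq_setD[OF m] mset_eq_length[OF m] assms by simp
qed

lemma pos_move_to:
  assumes "distinct K" "x \<in> set K" "j \<le> pos K x" "v \<in> set K"
  shows "pos (move_to j x K) v = (let k = pos K v in if k < j then k else if k < pos K x then Suc k else if k = pos K x then j else k)"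
proof -
  let ?k = "pos K v" and ?N = "move_to j x K"
  have k: "?k < length K" using pos_lt[OF assms(4)] .
  have p: "pos K x < length K" using pos_lt[OF assms(2)] .
  have pr: "distinct ?N" "length ?N = length K" using move_to_props[OF assms(1-3)] by auto
  define idx where "idx = (if ?k < j then ?k else if ?k < pos K x then Suc ?k else if ?k = pos K x then j else ?k)"
  have e: "?N ! idx = v"
    using move_to_nth[OF assms(1-3) k] assms(4) unfolding idx_def by simp
  have l: "idx < length ?N"
    using pr k p assms(3) unfolding idx_def by auto
  have "pos ?N v = idx" using pos_nth[OF pr(1) l] e by simp
  then show ?thesis unfolding Let_def idx_def by simp
qed

lemma ninv_move_to:
  assumes "distinct K" "x \<in> set K" "j \<le> pos K x"
  shows "ninv K (move_to j x K) \<le> pos K x - j \<and> pos (move_to j x K) x = j"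
proof -
  let ?N = "move_to j x K" and ?p = "pos K x"
  let ?f = "\<lambda>k. if k < j then k else if k < ?p then Suc k else if k = ?p then j else k"
  have pv: "\<And>v. v \<in> set K \<Longrightarrow> pos ?N v = ?f (pos K v)"
    using pos_move_to[OF assms] unfolding Let_def by simp
  have "invs K ?N \<subseteq> (\<lambda>k. (K!k, x)) ` {j..<?p}"
  proof
    fix q assume "q \<in> invs K ?N"
    then obtain y z where q: "q = (y,z)" "y \<in> set K" "z \<in> set K" "pos K y < pos K z"
      "pos ?N z < pos ?N y" by (auto simp: invs_def)
    have "?f (pos K z) < ?f (pos K y)" using q pv by simp
    then have "pos K z = ?p \<and> j \<le> pos K y \<and> pos K y < ?p" using q(4) assms(3)
      by (auto split: if_splits)
    then have "z = x" "j \<le> pos K y" "pos K y < ?p" using pos_inj[OF q(3) assms(2)] by auto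
    then show "q \<in> (\<lambda>k. (K!k, x)) ` {j..<?p}" using q(1) nth_pos[OF q(2)]
      by (auto intro!: image_eqI[where x="pos K y"])
  qed
  then have "card (invs K ?N) \<le> card ((\<lambda>k. (K!k, x)) ` {j..<?p})" by (intro card_mono) auto
  also have "\<dots> \<le> card {j..<?p}" by (rule card_image_le) simp
  finally have "ninv K ?N \<le> ?p - j" unfolding ninv_def by simp
  moreover have "pos ?N x = j" using pv[OF assms(2)] assms(3) by simp
  ultimately show ?thesis by simp
qed

lemma step_lb:
  assumes "distinct N" "x \<in> set N" "valid_action N x a"
  shows "distinct (step_state N x a) \<and> set (step_state N x a) = set N \<and>
         ninv N (step_state N x a) + pos (step_state N x a) x + 1 \<le> step_cost N x a"
proof -
  obtain ps j where a: "a = (ps, j)" by (cases a)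
  let ?K = "swaps ps N"
  have ps: "\<forall>i\<in>set ps. Suc i < length N" and j: "j \<le> pos ?K x"
    using assms(3) a by (auto simp: valid_action_def)
  have K: "distinct ?K" "set ?K = set N" using swaps_props[OF ps] assms by auto
  have xK: "x \<in> set ?K" using K assms by simp
  have m: "distinct (move_to j x ?K)" "set (move_to j x ?K) = set N"
    using move_to_props[OF K(1) xK j] K by auto
  have i1: "ninv N ?K \<le> length ps" using ninv_swaps[OF assms(1) ps] .
  have i2: "ninv ?K (move_to j x ?K) \<le> pos ?K x - j" "pos (move_to j x ?K) x = j"
    using ninv_move_to[OF K(1) xK j] by auto
  have "ninv N (move_to j x ?K) \<le> ninv N ?K + ninv ?K (move_to j x ?K)"
    using ninv_tri K m by blast
  then show ?thesis using a m i1 i2 j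
    by (simp add: step_state_def step_cost_def)
qed



definition keyf :: "'a list \<Rightarrow> 'a \<Rightarrow> ('a \<Rightarrow> bool) \<Rightarrow> 'a \<Rightarrow> nat \<times> nat" where
  "keyf N x b v = ((if pos N v < pos N x then (if b v then 2 else 0) else if v = x then 1 else 3), pos N v)"

definition transf :: "'a list \<Rightarrow> 'a \<Rightarrow> ('a \<Rightarrow> bool) \<Rightarrow> 'a list" where
  "transf N x b = sort_key (keyf N x b) N"

lemma sort_key_order:
  assumes "distinct N" "inj_on f (set N)" "y \<in> set N" "z \<in> set N"
  shows "pos (sort_key f N) y < pos (sort_key f N) z \<longleftrightarrow> f y < f z"
proof -
  let ?T = "sort_key f N"
  have T: "distinct ?T" "set ?T = set N" using assms by auto
  have "distinct (map f ?T)" using T assms(2) by (simp add: distinct_map)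
  then have sw: "sorted_wrt (<) (map f ?T)" using sorted_sort_key strict_sorted_iff by blast
  have yT: "y \<in> set ?T" "z \<in> set ?T" using T assms by auto
  have mono: "\<And>u v. u \<in> set ?T \<Longrightarrow> v \<in> set ?T \<Longrightarrow> pos ?T u < pos ?T v \<Longrightarrow> f u < f v"
  proof -
    fix u v assume uv: "u \<in> set ?T" "v \<in> set ?T" "pos ?T u < pos ?T v"
    have "(map f ?T) ! pos ?T u < (map f ?T) ! pos ?T v"
      using sorted_wrt_nth_less[OF sw uv(3)] pos_lt[OF uv(2)] by simp
    then show "f u < f v" using pos_lt[OF uv(1)] pos_lt[OF uv(2)] uv by simp
  qed
  show ?thesis
  proof
    assume "pos ?T y < pos ?T z" then show "f y < f z" using mono yT by blast
  next
    assume fyz: "f y < f z"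
    have yz: "y \<noteq> z"
    proof
      assume "y = z" then show False using fyz by simp
    qed
    have "\<not> pos ?T z < pos ?T y"
    proof
      assume "pos ?T z < pos ?T y"
      then have "f z < f y" using mono[OF yT(2) yT(1)] by simp
      then show False using fyz by (simp add: less_not_sym)
    qed
    then show "pos ?T y < pos ?T z" using pos_cases[OF yT yz] by simp
  qed
qed

lemma trans_props:
  "distinct N \<Longrightarrow> distinct (transf N x b) \<and> set (transf N x b) = set N"
  unfolding transf_def by simp

lemma trans_order:
  assumes "distinct N" "y \<in> set N" "z \<in> set N"
  shows "pos (transf N x b) y < pos (transf N x b) z \<longleftrightarrow> keyf N x b y < keyf N x b z"
proof -
  have inj: "inj_on (keyf N x b) (set N)"
  proof (rule inj_onI)
    fix u v assume uv: "u \<in> set N" "v \<in> set N" "keyf N x b u = keyf N x b v"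
    then have "snd (keyf N x b u) = snd (keyf N x b v)" by simp
    then have e: "pos N u = pos N v" unfolding keyf_def by simp
    show "u = v" using pos_inj[OF uv(1,2) e] .
  qed
  show ?thesis unfolding transf_def using sort_key_order[OF assms(1) inj assms(2,3)] .
qed

lemma trans_between:
  assumes "distinct N" "distinct M" "set M = set N" "x \<in> set N"
    and b: "\<forall>v\<in>set N. pos N v < pos N x \<longrightarrow> (b v \<longleftrightarrow> pos M x < pos M v)"
  shows "ninv N (transf N x b) + ninv (transf N x b) M \<le> ninv N M"
    and "pos (transf N x b) x \<le> pos M x"
proof -
  let ?T = "transf N x b"
  have T: "distinct ?T" "set ?T = set N" using trans_props[OF assms(1)] by auto
  have B: "pos ?T y < pos ?T z"
    if "y \<in> set N" "z \<in> set N" "pos N y < pos N z" "pos M y < pos M z" for y z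
  proof -
    have "x \<in> set M" using assms by simp
    have yx: "y = x \<longleftrightarrow> pos N y = pos N x" using pos_inj[OF that(1) assms(4)] by auto
    have zx: "z = x \<longleftrightarrow> pos N z = pos N x" using pos_inj[OF that(2) assms(4)] by auto
    have yx': "y = x \<Longrightarrow> pos M y = pos M x" by simp
    have zx': "z = x \<Longrightarrow> pos M z = pos M x" by simp
    define cy where "cy = (if pos N y < pos N x then (if b y then 2 else 0) else if y = x then 1 else (3::nat))"
    define cz where "cz = (if pos N z < pos N x then (if b z then 2 else 0) else if z = x then 1 else (3::nat))"
    have ky: "keyf N x b y = (cy, pos N y)" unfolding keyf_def cy_def by simp
    have kz: "keyf N x b z = (cz, pos N z)" unfolding keyf_def cz_def by simp
    have "cy \<le> cz"
    proof (cases "pos N y < pos N x")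
      case False
      then have "pos N x < pos N z" using that(3) by simp
      then have "cz = 3" "z \<noteq> x" unfolding cz_def using zx by auto
      then show ?thesis unfolding cy_def by simp
    next
      case yl: True
      show ?thesis
      proof (cases "b y")
        case False then show ?thesis unfolding cy_def using yl by simp
      next
        case True
        then have my: "pos M x < pos M y" using b that(1) yl by blast
        show ?thesis
        proof (cases "pos N z < pos N x")
          case True
          then have "b z" using b that(2) my that(4) by auto
          then show ?thesis unfolding cy_def cz_def using True yl by simp
        next
          case False
          have "z \<noteq> x" using my that(4) zx' by auto
          then show ?thesis unfolding cy_def cz_def using False by simp
        qed
      qed
    qed
    then have "keyf N x b y < keyf N x b z" unfolding ky kz using that(3)
      by (simp add: le_less)
    then show ?thesis using trans_order[OF assms(1) that(1,2), of x b] by simp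
  qed
  have C: "pos M y < pos M x" if "y \<in> set N" "pos ?T y < pos ?T x" for y
  proof -
    have "keyf N x b y < keyf N x b x" using trans_order[OF assms(1) that(1) assms(4), of x b] that(2) by simp
    moreover have "keyf N x b x = (1, pos N x)" unfolding keyf_def by simp
    ultimately have "pos N y < pos N x \<and> \<not> b y" unfolding keyf_def
      by (cases "pos N y < pos N x"; cases "b y"; cases "y = x"; simp)
    then have "pos N y < pos N x" "\<not> b y" by auto
    then have "\<not> pos M x < pos M y" using b that by auto
    moreover have "y \<noteq> x" using that by auto
    ultimately show ?thesis using pos_cases[of y M x] that assms by auto
  qed
  have s1: "invs N ?T \<subseteq> invs N M"
  proof
    fix q assume "q \<in> invs N ?T"
    then obtain y z where q: "q = (y,z)" "y \<in> set N" "z \<in> set N" "pos N y < pos N z"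
      "pos ?T z < pos ?T y" by (auto simp: invs_def)
    have "y \<noteq> z" using q by auto
    then have "pos M y < pos M z \<or> pos M z < pos M y" using pos_cases[of y M z] q assms by auto
    then have "pos M z < pos M y" using B[OF q(2,3,4)] q(5) by auto
    then show "q \<in> invs N M" using q by (auto simp: invs_def)
  qed
  have s2: "invs ?T M \<subseteq> invs N M"
  proof
    fix q assume "q \<in> invs ?T M"
    then obtain y z where q: "q = (y,z)" "y \<in> set N" "z \<in> set N" "pos ?T y < pos ?T z"
      "pos M z < pos M y" using T by (auto simp: invs_def)
    have "y \<noteq> z" using q by auto
    then have "pos N y < pos N z \<or> pos N z < pos N y" using pos_cases[of y N z] q by auto
    then have "pos N y < pos N z" using B[OF q(3,2) _ q(5)] q(4) by auto
    then show "q \<in> invs N M" using q by (auto simp: invs_def)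
  qed
  have dj: "invs N ?T \<inter> invs ?T M = {}" using T by (auto simp: invs_def)
  have "card (invs N ?T) + card (invs ?T M) = card (invs N ?T \<union> invs ?T M)"
    using dj by (simp add: card_Un_disjoint)
  also have "\<dots> \<le> card (invs N M)" by (rule card_mono) (use s1 s2 in auto)
  finally show "ninv N ?T + ninv ?T M \<le> ninv N M" unfolding ninv_def .
  have "{y \<in> set ?T. pos ?T y < pos ?T x} \<subseteq> {y \<in> set M. pos M y < pos M x}"
    using C T assms by auto
  then have "card {y \<in> set ?T. pos ?T y < pos ?T x} \<le> card {y \<in> set M. pos M y < pos M x}"
    by (intro card_mono) auto
  then show "pos ?T x \<le> pos M x"
    using card_before[OF T(1)] card_before[OF assms(2)] T assms by simp
qed



definition realize :: "'a list \<Rightarrow> 'a list \<Rightarrow> nat list" where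
  "realize K M = (SOME ps. swaps ps K = M \<and> length ps \<le> ninv K M \<and> (\<forall>i\<in>set ps. Suc i < length K))"

definition nextst :: "'a list \<Rightarrow> 'a \<Rightarrow> (nat \<Rightarrow> bool) \<Rightarrow> 'a list" where
  "nextst N x w = transf N x (\<lambda>v. w (pos N v))"

definition act :: "'a list \<Rightarrow> 'a \<Rightarrow> (nat \<Rightarrow> bool) \<Rightarrow> action" where
  "act N x w = (realize N (nextst N x w), pos (nextst N x w) x)"

fun arun :: "'a list \<Rightarrow> 'a list \<Rightarrow> (nat \<Rightarrow> bool) \<Rightarrow> action list" where
  "arun N [] w = []"
| "arun N (x # xs) w = act N x w # arun (nextst N x w) xs (\<lambda>i. w (i + pos N x))"

fun astates :: "'a list \<Rightarrow> 'a list \<Rightarrow> (nat \<Rightarrow> bool) \<Rightarrow> 'a list list" where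
  "astates N [] w = []"
| "astates N (x # xs) w = nextst N x w # astates (nextst N x w) xs (\<lambda>i. w (i + pos N x))"

fun used :: "'a list \<Rightarrow> 'a list \<Rightarrow> (nat \<Rightarrow> bool) \<Rightarrow> nat" where
  "used N [] w = 0"
| "used N (x # xs) w = pos N x + used (nextst N x w) xs (\<lambda>i. w (i + pos N x))"

fun phi :: "'a list \<Rightarrow> 'a list \<Rightarrow> 'a list list \<Rightarrow> nat" where
  "phi N (x # xs) (M # Ms) = ninv N M + pos M x + 1 + phi M xs Ms"
| "phi N _ _ = 0"

fun states :: "'a list \<Rightarrow> 'a list \<Rightarrow> action list \<Rightarrow> 'a list list" where
  "states N (x # xs) (a # as) = step_state N x a # states (step_state N x a) xs as"
| "states N _ _ = []"

definition theA :: "'a advice_alg" where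
  "theA L pre w = last (arun L pre w)"

lemma move_to_self:
  assumes "distinct T" "x \<in> set T"
  shows "move_to (pos T x) x T = T"
proof -
  have p: "pos T x < length T" using pos_lt[OF assms(2)] .
  have "move_to (pos T x) x T = take (pos T x) T @ x # drop (Suc (pos T x)) T"
    using move_to_eq[OF assms le_refl] by simp
  also have "\<dots> = T" using id_take_nth_drop[OF p] nth_pos[OF assms(2)] by simp
  finally show ?thesis .
qed

lemma nextst_props:
  assumes "distinct N"
  shows "distinct (nextst N x w) \<and> set (nextst N x w) = set N"
  unfolding nextst_def using trans_props[OF assms] .

lemma act_ok:
  assumes "distinct N" "x \<in> set N"
  shows "valid_action N x (act N x w) \<and> step_state N x (act N x w) = nextst N x w
         \<and> step_cost N x (act N x w) \<le> ninv N (nextst N x w) + pos (nextst N x w) x + 1"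
proof -
  let ?T = "nextst N x w"
  have T: "distinct ?T" "set ?T = set N" using nextst_props[OF assms(1)] by auto
  have "\<exists>ps. swaps ps N = ?T \<and> length ps \<le> ninv N ?T \<and> (\<forall>i\<in>set ps. Suc i < length N)"
    using exists_sort[OF assms(1) T] .
  then have "swaps (realize N ?T) N = ?T \<and> length (realize N ?T) \<le> ninv N ?T \<and>
    (\<forall>i\<in>set (realize N ?T). Suc i < length N)"
    unfolding realize_def by (rule someI_ex)
  then have r: "swaps (realize N ?T) N = ?T" "length (realize N ?T) \<le> ninv N ?T"
    "\<forall>i\<in>set (realize N ?T). Suc i < length N" by auto
  have xT: "x \<in> set ?T" using T assms by simp
  have "valid_action N x (act N x w)" unfolding valid_action_def act_def using r by simp
  moreover have "step_state N x (act N x w) = ?T"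
    unfolding step_state_def act_def using r move_to_self[OF T(1) xT] by simp
  moreover have "step_cost N x (act N x w) \<le> ninv N ?T + pos ?T x + 1"
    unfolding step_cost_def act_def using r by simp
  ultimately show ?thesis by (intro conjI)
qed

lemma arun_props:
  assumes "distinct N" "set \<sigma> \<subseteq> set N"
  shows "valid_run N \<sigma> (arun N \<sigma> w) \<and> run_cost N \<sigma> (arun N \<sigma> w) \<le> phi N \<sigma> (astates N \<sigma> w)
         \<and> used N \<sigma> w + length \<sigma> \<le> run_cost N \<sigma> (arun N \<sigma> w)"
  using assms
proof (induction \<sigma> arbitrary: N w)
  case Nil then show ?case by simp
next
  case (Cons x xs)
  let ?T = "nextst N x w" and ?w = "\<lambda>i. w (i + pos N x)"
  have x: "x \<in> set N" using Cons.prems by simp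
  have T: "distinct ?T" "set ?T = set N" using nextst_props[OF Cons.prems(1)] by auto
  have IH: "valid_run ?T xs (arun ?T xs ?w) \<and> run_cost ?T xs (arun ?T xs ?w) \<le> phi ?T xs (astates ?T xs ?w)
         \<and> used ?T xs ?w + length xs \<le> run_cost ?T xs (arun ?T xs ?w)"
    using Cons.IH[OF T(1)] T Cons.prems by simp
  have a: "valid_action N x (act N x w)" "step_state N x (act N x w) = ?T"
       "step_cost N x (act N x w) \<le> ninv N ?T + pos ?T x + 1"
    using act_ok[OF Cons.prems(1) x] by auto
  have lb: "ninv N ?T + pos ?T x + 1 \<le> step_cost N x (act N x w)"
    using step_lb[OF Cons.prems(1) x a(1)] a(2) by simp
  have pl: "pos N x \<le> ninv N ?T + pos ?T x"
    using pos_le_ninv[OF Cons.prems(1) T(1) T(2) x] .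
  have e1: "arun N (x # xs) w = act N x w # arun ?T xs ?w" by simp
  have e2: "valid_run N (x # xs) (arun N (x # xs) w) = (valid_action N x (act N x w) \<and> valid_run ?T xs (arun ?T xs ?w))"
    unfolding e1 using a(2) by simp
  have e3: "run_cost N (x # xs) (arun N (x # xs) w) = step_cost N x (act N x w) + run_cost ?T xs (arun ?T xs ?w)"
    unfolding e1 using a(2) by simp
  have e4: "phi N (x # xs) (astates N (x # xs) w) = ninv N ?T + pos ?T x + 1 + phi ?T xs (astates ?T xs ?w)"
    by simp
  have e5: "used N (x # xs) w = pos N x + used ?T xs ?w" by simp
  show ?case unfolding e2 e3 e4 e5 using IH a(1,3) lb pl by simp
qed

lemma arun_length: "length (arun N \<sigma> w) = length \<sigma>"
  by (induction \<sigma> arbitrary: N w) auto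

lemma arun_take: "take k (arun N \<sigma> w) = arun N (take k \<sigma>) w"
proof (induction \<sigma> arbitrary: N w k)
  case Nil then show ?case by simp
next
  case (Cons x xs) then show ?case by (cases k) auto
qed

lemma alg_actions_theA: "alg_actions theA L \<sigma> w = arun L \<sigma> w"
proof -
  have "\<And>t. t < length \<sigma> \<Longrightarrow> theA L (take (Suc t) \<sigma>) w = arun L \<sigma> w ! t"
  proof -
    fix t assume t: "t < length \<sigma>"
    have "theA L (take (Suc t) \<sigma>) w = last (take (Suc t) (arun L \<sigma> w))"
      unfolding theA_def arun_take ..
    also have "\<dots> = arun L \<sigma> w ! t"
      using t arun_length[of L \<sigma> w] by (simp add: take_Suc_conv_app_nth)
    finally show "theA L (take (Suc t) \<sigma>) w = arun L \<sigma> w ! t" .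
  qed
  then have "alg_actions theA L \<sigma> w = map (\<lambda>t. arun L \<sigma> w ! t) [0..<length (arun L \<sigma> w)]"
    unfolding alg_actions_def arun_length by simp
  also have "\<dots> = arun L \<sigma> w" by (rule map_nth)
  finally show ?thesis .
qed

lemma nextst_cong:
  assumes "\<forall>i<pos N x. w' i = w i"
  shows "nextst N x w' = nextst N x w"
proof -
  have "keyf N x (\<lambda>v. w' (pos N v)) = keyf N x (\<lambda>v. w (pos N v))"
    using assms by (auto simp: keyf_def fun_eq_iff)
  then show ?thesis unfolding nextst_def transf_def by simp
qed

lemma arun_cong:
  assumes "\<forall>i<used N \<sigma> w. w' i = w i"
  shows "arun N \<sigma> w' = arun N \<sigma> w"
  using assms
proof (induction \<sigma> arbitrary: N w w')
  case Nil then show ?case by simp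
next
  case (Cons x xs)
  have n: "nextst N x w' = nextst N x w" using Cons.prems by (intro nextst_cong) auto
  have "\<forall>i<used (nextst N x w) xs (\<lambda>i. w (i + pos N x)). w' (i + pos N x) = w (i + pos N x)"
    using Cons.prems by auto
  then have "arun (nextst N x w) xs (\<lambda>i. w' (i + pos N x)) = arun (nextst N x w) xs (\<lambda>i. w (i + pos N x))"
    by (intro Cons.IH) simp
  moreover have "act N x w' = act N x w" using n by (simp add: act_def)
  ultimately show ?case using n by simp
qed

lemma states_lb:
  assumes "valid_run N \<sigma> as" "distinct N" "set \<sigma> \<subseteq> set N"
  shows "phi N \<sigma> (states N \<sigma> as) \<le> run_cost N \<sigma> as \<and> length (states N \<sigma> as) = length \<sigma>
         \<and> (\<forall>M\<in>set (states N \<sigma> as). distinct M \<and> set M = set N)"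
  using assms
proof (induction \<sigma> arbitrary: N as)
  case Nil then show ?case by (cases as) auto
next
  case (Cons x xs)
  then obtain a as' where as: "as = a # as'" by (cases as) auto
  let ?T = "step_state N x a"
  have x: "x \<in> set N" using Cons.prems by simp
  have va: "valid_action N x a" "valid_run ?T xs as'" using Cons.prems(1) as by auto
  have s: "distinct ?T" "set ?T = set N" "ninv N ?T + pos ?T x + 1 \<le> step_cost N x a"
    using step_lb[OF Cons.prems(2) x va(1)] by auto
  have sx: "set xs \<subseteq> set ?T" using s(2) Cons.prems(3) by simp
  have IH: "phi ?T xs (states ?T xs as') \<le> run_cost ?T xs as' \<and> length (states ?T xs as') = length xs
         \<and> (\<forall>M\<in>set (states ?T xs as'). distinct M \<and> set M = set ?T)"
    using Cons.IH[OF va(2) s(1) sx] .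
  have e1: "states N (x # xs) as = ?T # states ?T xs as'" using as by simp
  have e2: "run_cost N (x # xs) as = step_cost N x a + run_cost ?T xs as'" using as by simp
  have e3: "phi N (x # xs) (?T # states ?T xs as') = ninv N ?T + pos ?T x + 1 + phi ?T xs (states ?T xs as')"
    by simp
  have c1: "phi N (x # xs) (states N (x # xs) as) \<le> run_cost N (x # xs) as"
    unfolding e1 e2 e3 using IH s(3) by linarith
  have c2: "length (states N (x # xs) as) = length (x # xs)" unfolding e1 using IH by simp
  have c3: "\<forall>M\<in>set (states N (x # xs) as). distinct M \<and> set M = set N"
    unfolding e1 using IH s(1,2) by simp
  show ?case using c1 c2 c3 by (intro conjI)
qed

lemma phi_start:
  assumes "set B = set N" "set M = set N" "\<forall>M'\<in>set Ms. set M' = set N"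
  shows "phi B xs Ms \<le> ninv B M + phi M xs Ms"
proof (cases xs)
  case Nil then show ?thesis by simp
next
  case (Cons x xs')
  show ?thesis
  proof (cases Ms)
    case Nil then show ?thesis using Cons by simp
  next
    case (Cons M1 Ms')
    have "ninv B M1 \<le> ninv B M + ninv M M1"
      using ninv_tri[of M B M1] assms Cons by simp
    then show ?thesis using Cons \<open>xs = x # xs'\<close> by simp
  qed
qed

lemma exchange:
  assumes "distinct N" "set \<sigma> \<subseteq> set N" "length Ms = length \<sigma>"
    "\<forall>M\<in>set Ms. distinct M \<and> set M = set N"
  shows "\<exists>w. phi N \<sigma> (astates N \<sigma> w) \<le> phi N \<sigma> Ms"
  using assms
proof (induction \<sigma> arbitrary: N Ms)
  case Nil then show ?case by simp
next
  case (Cons x xs)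
  then obtain M Ms' where Ms: "Ms = M # Ms'" by (cases Ms) auto
  have x: "x \<in> set N" using Cons.prems by simp
  have M: "distinct M" "set M = set N" using Cons.prems(4) Ms by auto
  define p where "p = pos N x"
  define b0 where "b0 = (\<lambda>i. pos M x < pos M (N ! i))"
  define T where "T = transf N x (\<lambda>v. b0 (pos N v))"
  have T: "distinct T" "set T = set N" unfolding T_def using trans_props[OF Cons.prems(1)] by auto
  have bcond: "\<forall>v\<in>set N. pos N v < pos N x \<longrightarrow> (b0 (pos N v) \<longleftrightarrow> pos M x < pos M v)"
    unfolding b0_def by simp
  have tb: "ninv N T + ninv T M \<le> ninv N M" "pos T x \<le> pos M x"
    using trans_between[OF Cons.prems(1) M(1) M(2) x bcond] unfolding T_def by auto
  have "\<exists>w. phi T xs (astates T xs w) \<le> phi T xs Ms'"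
    by (rule Cons.IH) (use T Cons.prems Ms in auto)
  then obtain w0 where w0: "phi T xs (astates T xs w0) \<le> phi T xs Ms'" by blast
  define w where "w = (\<lambda>i. if i < p then b0 i else w0 (i - p))"
  have nx: "nextst N x w = T"
  proof -
    have "nextst N x w = nextst N x (\<lambda>i. b0 i)"
      by (rule nextst_cong) (simp add: w_def p_def)
    then show ?thesis unfolding nextst_def T_def by simp
  qed
  have sh: "(\<lambda>i. w (i + pos N x)) = w0" unfolding w_def p_def by auto
  have ps: "phi T xs Ms' \<le> ninv T M + phi M xs Ms'"
    using phi_start[OF T(2) M(2)] Cons.prems(4) Ms by auto
  have "phi N (x # xs) (astates N (x # xs) w) = ninv N T + pos T x + 1 + phi T xs (astates T xs w0)"
    using nx sh by simp
  also have "\<dots> \<le> ninv N M + pos M x + 1 + phi M xs Ms'" using w0 ps tb by simp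
  also have "\<dots> = phi N (x # xs) Ms" using Ms by simp
  finally have "phi N (x # xs) (astates N (x # xs) w) \<le> phi N (x # xs) Ms" .
  then show ?case by (rule exI[where x=w])
qed



theorem theorem1:
  "\<exists>A :: 'a advice_alg. \<forall>L \<sigma>. distinct L \<and> set \<sigma> \<subseteq> set L \<longrightarrow>
     (\<exists>w. valid_run L \<sigma> (alg_actions A L \<sigma> w)
          \<and> run_cost L \<sigma> (alg_actions A L \<sigma> w) = OPT L \<sigma>
          \<and> reads_at_most A L \<sigma> w (OPT L \<sigma> - length \<sigma>))"
proof (intro exI[where x=theA] allI impI)
  fix L :: "'a list" and \<sigma> :: "'a list"
  assume h: "distinct L \<and> set \<sigma> \<subseteq> set L"
  then have d: "distinct L" and s: "set \<sigma> \<subseteq> set L" by auto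
  have ex: "\<exists>c as. valid_run L \<sigma> as \<and> run_cost L \<sigma> as = c"
    using arun_props[OF d s, of "\<lambda>_. False"] by blast
  have "\<exists>as. valid_run L \<sigma> as \<and> run_cost L \<sigma> as = OPT L \<sigma>"
    unfolding OPT_def by (rule LeastI_ex) (rule ex)
  then obtain as0 where as0: "valid_run L \<sigma> as0" "run_cost L \<sigma> as0 = OPT L \<sigma>" by blast
  have sl: "phi L \<sigma> (states L \<sigma> as0) \<le> run_cost L \<sigma> as0 \<and> length (states L \<sigma> as0) = length \<sigma>
         \<and> (\<forall>M\<in>set (states L \<sigma> as0). distinct M \<and> set M = set L)"
    using states_lb[OF as0(1) d s] .
  have "\<exists>w. phi L \<sigma> (astates L \<sigma> w) \<le> phi L \<sigma> (states L \<sigma> as0)"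
    using exchange[OF d s] sl by blast
  then obtain w where pw: "phi L \<sigma> (astates L \<sigma> w) \<le> phi L \<sigma> (states L \<sigma> as0)" by blast
  have ar: "valid_run L \<sigma> (arun L \<sigma> w) \<and> run_cost L \<sigma> (arun L \<sigma> w) \<le> phi L \<sigma> (astates L \<sigma> w)
         \<and> used L \<sigma> w + length \<sigma> \<le> run_cost L \<sigma> (arun L \<sigma> w)"
    using arun_props[OF d s, of w] .
  have le: "OPT L \<sigma> \<le> run_cost L \<sigma> (arun L \<sigma> w)"
    unfolding OPT_def by (rule Least_le) (use ar in blast)
  have eq: "run_cost L \<sigma> (arun L \<sigma> w) = OPT L \<sigma>" using le ar pw sl as0(2) by linarith
  have u: "used L \<sigma> w \<le> OPT L \<sigma> - length \<sigma>" using eq ar by linarith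
  have r: "reads_at_most theA L \<sigma> w (OPT L \<sigma> - length \<sigma>)"
    unfolding reads_at_most_def alg_actions_theA
  proof (intro allI impI)
    fix w' :: "nat \<Rightarrow> bool"
    assume "\<forall>i<OPT L \<sigma> - length \<sigma>. w' i = w i"
    then have "\<forall>i<used L \<sigma> w. w' i = w i" using u by auto
    then show "arun L \<sigma> w' = arun L \<sigma> w" by (rule arun_cong)
  qed
  show "\<exists>w. valid_run L \<sigma> (alg_actions theA L \<sigma> w)
          \<and> run_cost L \<sigma> (alg_actions theA L \<sigma> w) = OPT L \<sigma>
          \<and> reads_at_most theA L \<sigma> w (OPT L \<sigma> - length \<sigma>)"
    using ar eq r unfolding alg_actions_theA by blast
qed


end
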